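(* Let $E$ be a (Hausdorff, real) topological vector space. The following are equivalent: (i) $E$ contains the topological vector space $\mathbb{R}^{(\mathbb{N})}$ as a (topologically isomorphic) subspace; (ii) $E$ contains the topological group $\mathbb{Z}^{(\mathbb{N})}$ as a (topologically isomorphic) subgroup; (iii) $E$ has an infinite absolutely Cauchy summable subset. Moreover, if $E$ is complete, these three conditions are also equivalent to: (iv) $E$ contains the topological vector space $\mathbb{R}^{\mathbb{N}}$ as a (topologically isomorphic) subspace.
   Context: $\mathbb{R}^{\mathbb{N}}$ and $\mathbb{Z}^{\mathbb{N}}$ carry the Tychonoff product topology ($\mathbb{Z}$ discrete), and $\mathbb{R}^{(\mathbb{N})}$, $\mathbb{Z}^{(\mathbb{N})}$ denote the subsets of finitely supported sequences, with the subspace topology of the product. A subset $A$ of $E$ (viewed as an abelian topological group) is absolutely Cauchy summable if for every neighbourhood $U$ of $0$ there is a finite $F\subseteq A$ such that the additive subgroup generated by $A\setminus F$ is contained in $U$. *)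

theory Defs
  imports "HOL-Analysis.Analysis"
begin

text \<open>Finitely supported sequences (as subsets of the Tychonoff products
  nat => real and nat => int; the function types carry the
  product topology from HOL-Analysis Function_Topology, and int is discrete).\<close>

definition fin_supp :: "(nat \<Rightarrow> 'b::zero) set" where
  "fin_supp = {f. finite {n. f n \<noteq> 0}}"

definition int_span :: "'a::real_vector set \<Rightarrow> 'a set" where
  "int_span B = {(\<Sum>a\<in>F. of_int (k a) *\<^sub>R a) | F k. finite F \<and> F \<subseteq> B}"

definition abs_cauchy_summable :: "'a::{real_vector, topological_space} set \<Rightarrow> bool" where
  "abs_cauchy_summable A \<longleftrightarrow>
     (\<forall>U. open U \<and> 0 \<in> U \<longrightarrow> (\<exists>F. finite F \<and> F \<subseteq> A \<and> int_span (A - F) \<subseteq> U))"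

definition tvs_cauchy :: "'a::{real_vector, topological_space} filter \<Rightarrow> bool" where
  "tvs_cauchy F \<longleftrightarrow>
     (\<forall>U. open U \<and> 0 \<in> U \<longrightarrow> (\<exists>S. eventually (\<lambda>x. x \<in> S) F \<and> (\<forall>x\<in>S. \<forall>y\<in>S. x - y \<in> U)))"

definition tvs_complete :: "'a::{real_vector, topological_space} itself \<Rightarrow> bool" where
  "tvs_complete _ \<longleftrightarrow> (\<forall>F::'a filter. F \<noteq> bot \<and> tvs_cauchy F \<longrightarrow> (\<exists>x. F \<le> nhds x))"

end

theory Submission
  imports Defs
begin

lemma open_vimage_UNIV: "continuous_on UNIV f \<Longrightarrow> open B \<Longrightarrow> open (f -` B)"
  using continuous_on_open_vimage[of UNIV f] by auto

context
  fixes dummy :: "'a::{real_vector, topological_monoid_add, t2_space} itself"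
  assumes sc: "continuous_on UNIV (\<lambda>p::real \<times> 'a. fst p *\<^sub>R snd p)"
begin

lemma tendsto_scaleR':
  fixes g :: "_ \<Rightarrow> 'a"
  assumes "(f \<longlongrightarrow> a) F" "(g \<longlongrightarrow> b) F"
  shows "((\<lambda>x. f x *\<^sub>R g x) \<longlongrightarrow> a *\<^sub>R b) F"
proof -
  have "((\<lambda>x. (f x, g x)) \<longlongrightarrow> (a, b)) F" using assms by (rule tendsto_Pair)
  from continuous_on_tendsto_compose[OF sc this] show ?thesis by (simp add: o_def)
qed

lemma cont_scale: "continuous_on UNIV (\<lambda>v::'a. c *\<^sub>R v)"
  unfolding continuous_on_def
  by (auto intro!: tendsto_scaleR' tendsto_ident_at tendsto_const)

lemma cont_translate: "continuous_on UNIV (\<lambda>v::'a. v + c)"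
  by (intro continuous_intros)

lemma tendsto_uminus':
  fixes g :: "_ \<Rightarrow> 'a"
  assumes "(g \<longlongrightarrow> b) F"
  shows "((\<lambda>x. - g x) \<longlongrightarrow> - b) F"
  using tendsto_scaleR'[OF tendsto_const[of "-1::real"] assms] by simp

lemma tendsto_diff':
  fixes g :: "_ \<Rightarrow> 'a"
  assumes "(f \<longlongrightarrow> a) F" "(g \<longlongrightarrow> b) F"
  shows "((\<lambda>x. f x - g x) \<longlongrightarrow> a - b) F"
  using tendsto_add[OF assms(1) tendsto_uminus'[OF assms(2)]] by simp

lemma tendsto_sum':
  fixes f :: "_ \<Rightarrow> _ \<Rightarrow> 'a"
  assumes "finite S" "\<And>i. i \<in> S \<Longrightarrow> (f i \<longlongrightarrow> a i) F"
  shows "((\<lambda>x. \<Sum>i\<in>S. f i x) \<longlongrightarrow> (\<Sum>i\<in>S. a i)) F"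
  using assms by (induction S rule: finite_induct) (auto intro!: tendsto_add)

lemma open_half:
  assumes "open (U::'a set)" "0 \<in> U"
  obtains V where "open V" "0 \<in> V" "\<And>x y. x \<in> V \<Longrightarrow> y \<in> V \<Longrightarrow> x + y \<in> U"
proof -
  have c: "continuous_on UNIV (\<lambda>p::'a\<times>'a. fst p + snd p)"
    by (intro continuous_intros)
  have "open ((\<lambda>p::'a\<times>'a. fst p + snd p) -` U)" by (rule open_vimage_UNIV[OF c assms(1)])
  moreover have "(0,0) \<in> (\<lambda>p::'a\<times>'a. fst p + snd p) -` U" using assms by simp
  ultimately obtain A B where AB: "open A" "open B" "(0,0) \<in> A \<times> B"
     "A \<times> B \<subseteq> (\<lambda>p::'a\<times>'a. fst p + snd p) -` U"
    by (rule open_prod_elim)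
  show ?thesis
    apply (rule that[of "A \<inter> B"])
    using AB by auto
qed

lemma open_balanced:
  assumes "open (U::'a set)" "0 \<in> U"
  obtains V where "open V" "0 \<in> V" "\<And>t v. \<bar>t\<bar> \<le> 1 \<Longrightarrow> v \<in> V \<Longrightarrow> t *\<^sub>R v \<in> U"
proof -
  have "open ((\<lambda>p::real \<times> 'a. fst p *\<^sub>R snd p) -` U)" by (rule open_vimage_UNIV[OF sc assms(1)])
  moreover have "(0,0) \<in> (\<lambda>p::real \<times> 'a. fst p *\<^sub>R snd p) -` U" using assms by simp
  ultimately obtain A B where AB: "open A" "open B" "(0,0) \<in> A \<times> B"
     "A \<times> B \<subseteq> (\<lambda>p::real \<times> 'a. fst p *\<^sub>R snd p) -` U"
    by (rule open_prod_elim)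
  from AB obtain d where d: "d > 0" "ball 0 d \<subseteq> A"
    by (meson SigmaD1 openE)
  define V where "V = (\<lambda>v. (2/d) *\<^sub>R v) -` B"
  have "open V" unfolding V_def by (rule open_vimage_UNIV[OF cont_scale AB(2)])
  moreover have "0 \<in> V" using AB unfolding V_def by auto
  moreover have "t *\<^sub>R v \<in> U" if "\<bar>t\<bar> \<le> 1" "v \<in> V" for t v
  proof -
    have "t * d / 2 \<in> A" using d that by (auto simp: dist_real_def abs_mult)
    moreover have "(2/d) *\<^sub>R v \<in> B" using that unfolding V_def by auto
    ultimately have "(t * d / 2) *\<^sub>R ((2/d) *\<^sub>R v) \<in> U" using AB(4) by auto
    thus ?thesis using d by simp
  qed
  ultimately show ?thesis by (rule that)
qed

end

context
  fixes dummy :: "'a::{real_vector, topological_monoid_add, t2_space} itself"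
  assumes sc: "continuous_on UNIV (\<lambda>p::real \<times> 'a. fst p *\<^sub>R snd p)"
begin

lemma open_translate: "open (U::'a set) \<Longrightarrow> open {z. z + c \<in> U}"
  using open_vimage_UNIV[OF cont_translate[OF sc, of c]] by (simp add: vimage_def)

lemma open_scaled: "open (U::'a set) \<Longrightarrow> open {z. c *\<^sub>R z \<in> U}"
  using open_vimage_UNIV[OF cont_scale[OF sc, of c]] by (simp add: vimage_def)

lemma scal_id: "(1 / real (Suc K)) *\<^sub>R (of_int k *\<^sub>R (b::'a)) + (c - of_int k / real (Suc K)) *\<^sub>R b = c *\<^sub>R b"
  by (simp add: scaleR_add_left[symmetric])

lemma coeff_lim: "((\<lambda>K. c - of_int \<lfloor>real (Suc K) * c\<rfloor> / real (Suc K)) \<longlongrightarrow> 0) sequentially"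
proof (rule Lim_null_comparison)
  show "((\<lambda>K. inverse (real (Suc K))) \<longlongrightarrow> 0) sequentially"
    by (rule LIMSEQ_inverse_real_of_nat)
  show "\<forall>\<^sub>F K in sequentially. norm (c - of_int \<lfloor>real (Suc K) * c\<rfloor> / real (Suc K)) \<le> inverse (real (Suc K))"
  proof (rule always_eventually, rule allI)
    fix K
    define n where "n = real (Suc K)"
    have n: "n > 0" unfolding n_def by simp
    have a: "of_int \<lfloor>n * c\<rfloor> \<le> n * c" "n * c < of_int \<lfloor>n * c\<rfloor> + 1" by linarith+
    have h: "c - of_int \<lfloor>n * c\<rfloor> / n = (n * c - of_int \<lfloor>n * c\<rfloor>) / n" using n by (simp add: field_simps)
    have "0 \<le> (n * c - of_int \<lfloor>n * c\<rfloor>) / n" using a n by simp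
    moreover have "(n * c - of_int \<lfloor>n * c\<rfloor>) / n \<le> 1 / n" proof (rule divide_right_mono)
      show "n * c - of_int \<lfloor>n * c\<rfloor> \<le> 1" using a by linarith
    qed (use n in auto)
    ultimately have "0 \<le> c - of_int \<lfloor>n * c\<rfloor> / n" "c - of_int \<lfloor>n * c\<rfloor> / n \<le> inverse n"
      using h by (auto simp: divide_inverse)
    thus "norm (c - of_int \<lfloor>real (Suc K) * c\<rfloor> / real (Suc K)) \<le> inverse (real (Suc K))"
      unfolding n_def by simp
  qed
qed

lemma stepA:
  assumes "open (U::'a set)" "0 \<in> U"
  obtains V where "open V" "0 \<in> V"
    "\<And>B S c. int_span B \<subseteq> V \<Longrightarrow> finite S \<Longrightarrow> S \<subseteq> B \<Longrightarrow> (\<Sum>b\<in>S. c b *\<^sub>R b) \<in> U"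
proof -
  obtain U1 where U1: "open U1" "0 \<in> U1" "\<And>x y. x \<in> U1 \<Longrightarrow> y \<in> U1 \<Longrightarrow> x + y \<in> U"
    using open_half[OF sc assms] by blast
  obtain V where V: "open V" "0 \<in> V" "\<And>t v. \<bar>t\<bar> \<le> 1 \<Longrightarrow> v \<in> V \<Longrightarrow> t *\<^sub>R v \<in> U1"
    using open_balanced[OF sc U1(1,2)] by blast
  show ?thesis
  proof (rule that[OF V(1,2)])
    fix B S and c :: "'a \<Rightarrow> real"
    assume B: "int_span B \<subseteq> V" and S: "finite S" "S \<subseteq> B"
    define k where "k = (\<lambda>K b. \<lfloor>real (Suc K) * c b\<rfloor>)"
    define e where "e = (\<lambda>K. \<Sum>b\<in>S. (c b - of_int (k K b) / real (Suc K)) *\<^sub>R b)"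
    have "(e \<longlongrightarrow> (\<Sum>b\<in>S. 0 *\<^sub>R b)) sequentially"
      unfolding e_def k_def
      by (intro tendsto_sum'[OF sc S(1)] tendsto_scaleR'[OF sc] coeff_lim tendsto_const)
    hence "(e \<longlongrightarrow> 0) sequentially" by simp
    hence "eventually (\<lambda>K. e K \<in> U1) sequentially"
      using U1 by (auto simp: tendsto_def)
    then obtain K where K: "e K \<in> U1" by (auto simp: eventually_sequentially)
    have "(\<Sum>b\<in>S. of_int (k K b) *\<^sub>R b) \<in> int_span B"
      unfolding int_span_def using S by blast
    hence "(1 / real (Suc K)) *\<^sub>R (\<Sum>b\<in>S. of_int (k K b) *\<^sub>R b) \<in> U1"
      using B V(3) by auto
    from U1(3)[OF this K]
    have "(1 / real (Suc K)) *\<^sub>R (\<Sum>b\<in>S. of_int (k K b) *\<^sub>R b) + e K \<in> U" .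
    moreover have "(1 / real (Suc K)) *\<^sub>R (\<Sum>b\<in>S. of_int (k K b) *\<^sub>R b) + e K = (\<Sum>b\<in>S. c b *\<^sub>R b)"
      unfolding e_def scaleR_sum_right sum.distrib[symmetric]
      by (rule sum.cong[OF refl], rule scal_id)
    ultimately show "(\<Sum>b\<in>S. c b *\<^sub>R b) \<in> U" by simp
  qed
qed

lemma closure_lemma:
  fixes X :: "nat \<Rightarrow> 'a"
  assumes "(X \<longlongrightarrow> l) sequentially" "eventually (\<lambda>M. X M \<in> W) sequentially"
    "open W" "0 \<in> W" "\<And>u v. u \<in> W \<Longrightarrow> v \<in> W \<Longrightarrow> u + v \<in> V"
  shows "l \<in> V"
proof -
  have o: "open {z. l + (-1) *\<^sub>R z \<in> W}"
    using open_translate[OF open_scaled[OF assms(3), of "-1"], of "-l"]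
    by (simp add: algebra_simps)
  have "l \<in> {z. l + (-1) *\<^sub>R z \<in> W}" using assms(4) by simp
  with assms(1) o have "eventually (\<lambda>M. X M \<in> {z. l + (-1) *\<^sub>R z \<in> W}) sequentially"
    by (auto simp: tendsto_def)
  with assms(2) have "eventually (\<lambda>M. X M \<in> {z. l + (-1) *\<^sub>R z \<in> W} \<and> X M \<in> W) sequentially"
    by (auto elim: eventually_elim2)
  then obtain N where "\<forall>M\<ge>N. X M \<in> {z. l + (-1) *\<^sub>R z \<in> W} \<and> X M \<in> W"
    by (auto simp: eventually_sequentially)
  hence "l + (-1) *\<^sub>R X N \<in> W" "X N \<in> W" by auto
  from assms(5)[OF this] show ?thesis by simp
qed

lemma head_lemma:
  fixes a :: "nat \<Rightarrow> 'a"
  assumes "open Z" "0 \<in> Z"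
  shows "\<exists>d>0. \<forall>c. (\<forall>j<n. \<bar>c j\<bar> < d) \<longrightarrow> (\<Sum>j<n. c j *\<^sub>R a j) \<in> Z"
  using assms
proof (induction n arbitrary: Z)
  case 0
  then show ?case by (intro exI[of _ 1]) auto
next
  case (Suc n)
  obtain Z1 where Z1: "open Z1" "0 \<in> Z1" "\<And>x y. x \<in> Z1 \<Longrightarrow> y \<in> Z1 \<Longrightarrow> x + y \<in> Z"
    using open_half[OF sc Suc.prems] by blast
  obtain d1 where d1: "d1 > 0" "\<forall>c. (\<forall>j<n. \<bar>c j\<bar> < d1) \<longrightarrow> (\<Sum>j<n. c j *\<^sub>R a j) \<in> Z1"
    using Suc.IH[OF Z1(1,2)] by blast
  have "open ((\<lambda>t. t *\<^sub>R a n) -` Z1)"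
    by (rule open_vimage_UNIV[OF _ Z1(1)])
       (auto simp: continuous_on_def intro!: tendsto_scaleR'[OF sc] tendsto_ident_at tendsto_const)
  moreover have "0 \<in> (\<lambda>t. t *\<^sub>R a n) -` Z1" using Z1 by simp
  ultimately obtain d2 where d2: "d2 > 0" "ball 0 d2 \<subseteq> (\<lambda>t. t *\<^sub>R a n) -` Z1"
    by (meson openE)
  show ?case
  proof (intro exI[of _ "min d1 d2"] conjI allI impI)
    show "min d1 d2 > 0" using d1 d2 by simp
    fix c :: "nat \<Rightarrow> real" assume c: "\<forall>j<Suc n. \<bar>c j\<bar> < min d1 d2"
    have "(\<Sum>j<n. c j *\<^sub>R a j) \<in> Z1" using c d1 by auto
    moreover have "c n \<in> ball 0 d2" using c by (simp add: dist_real_def)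
    hence "c n *\<^sub>R a n \<in> Z1" using d2 by blast
    ultimately show "(\<Sum>j<Suc n. c j *\<^sub>R a j) \<in> Z" using Z1(3) by simp
  qed
qed

end

definition good_seq :: "(nat \<Rightarrow> 'a::{real_vector,topological_space}) \<Rightarrow> bool" where
"good_seq a \<longleftrightarrow> (\<forall>n. \<exists>V W. open V \<and> 0 \<in> V \<and> (\<forall>u\<in>V. \<forall>v\<in>V. u + v \<noteq> a n) \<and> open W \<and> 0 \<in> W \<and>
    (\<forall>u\<in>W. \<forall>v\<in>W. u + v \<in> V) \<and> (\<forall>S c. finite S \<and> S \<subseteq> {n<..} \<longrightarrow> (\<Sum>m\<in>S. c m *\<^sub>R a m) \<in> W)) \<and>
  (\<forall>U. open U \<and> 0 \<in> U \<longrightarrow> (\<exists>N. \<forall>S c. finite S \<and> S \<subseteq> {N..} \<longrightarrow> (\<Sum>m\<in>S. c m *\<^sub>R a m) \<in> U))"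

lemma reindex_comb:
  fixes a :: "nat \<Rightarrow> 'a::real_vector"
  assumes "inj a"
  shows "(\<Sum>m\<in>S. c m *\<^sub>R a m) = (\<Sum>x\<in>a`S. c (inv a x) *\<^sub>R x)"
  using assms by (simp add: sum.reindex inj_on_subset[OF assms] o_def)

context
  fixes dummy :: "'a::{real_vector, topological_monoid_add, t2_space} itself"
  assumes sc: "continuous_on UNIV (\<lambda>p::real \<times> 'a. fst p *\<^sub>R snd p)"
begin

lemma iii_good:
  fixes A :: "'a set"
  assumes inf: "infinite A" and acs: "abs_cauchy_summable A"
  shows "\<exists>a::nat \<Rightarrow> 'a. good_seq a"
proof -
  have acs': "\<exists>F. finite F \<and> F \<subseteq> A \<and> (\<forall>S c. finite S \<and> S \<subseteq> A - F \<longrightarrow> (\<Sum>x\<in>S. c x *\<^sub>R x) \<in> U)"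
    if UU: "open U" "0 \<in> U" for U
  proof -
    obtain V where V: "open V" "0 \<in> V"
      "\<And>B S c. int_span B \<subseteq> V \<Longrightarrow> finite S \<Longrightarrow> S \<subseteq> B \<Longrightarrow> (\<Sum>b\<in>S. c b *\<^sub>R b) \<in> U"
      using stepA[OF sc UU] by blast
    have "\<exists>F. finite F \<and> F \<subseteq> A \<and> int_span (A - F) \<subseteq> V"
      using acs V(1,2) unfolding abs_cauchy_summable_def by (simp only: simp_thms)
    then obtain F where F: "finite F \<and> F \<subseteq> A \<and> int_span (A - F) \<subseteq> V" ..
    show ?thesis
      apply (rule exI[of _ F])
      using F V(3) by (meson order.refl)
  qed
  have H1: "\<exists>G. finite G \<and> (\<exists>V W. open V \<and> 0 \<in> V \<and> (\<forall>u\<in>V. \<forall>v\<in>V. u + v \<noteq> b) \<and> open W \<and> 0 \<in> W \<and>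
    (\<forall>u\<in>W. \<forall>v\<in>W. u + v \<in> V) \<and> (\<forall>S c. finite S \<and> S \<subseteq> A - G \<longrightarrow> (\<Sum>x\<in>S. c x *\<^sub>R x) \<in> W))"
    if bA: "b \<in> A - {0}" for b
  proof -
    from bA obtain Ob where Ob: "open Ob" "0 \<in> Ob" "b \<notin> Ob" using separation_t1[of 0 b] by auto
    obtain V where V: "open V" "0 \<in> V" "\<And>x y. x \<in> V \<Longrightarrow> y \<in> V \<Longrightarrow> x + y \<in> Ob"
      using open_half[OF sc Ob(1,2)] by blast
    obtain W where W: "open W" "0 \<in> W" "\<And>x y. x \<in> W \<Longrightarrow> y \<in> W \<Longrightarrow> x + y \<in> V"
      using open_half[OF sc V(1,2)] by blast
    obtain F where F: "finite F" "F \<subseteq> A" "\<forall>S c. finite S \<and> S \<subseteq> A - F \<longrightarrow> (\<Sum>x\<in>S. c x *\<^sub>R x) \<in> W"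
      using acs'[OF W(1,2)] by blast
    have "\<forall>u\<in>V. \<forall>v\<in>V. u + v \<noteq> b" using V(3) Ob(3) by metis
    show ?thesis
      apply (rule exI[of _ F])
      apply (rule conjI[OF F(1)])
      apply (rule exI[of _ V], rule exI[of _ W])
      using F(3) V(1,2) W \<open>\<forall>u\<in>V. \<forall>v\<in>V. u + v \<noteq> b\<close> by blast
  qed
  hence "\<forall>b\<in>A - {0}. \<exists>G. finite G \<and> (\<exists>V W. open V \<and> 0 \<in> V \<and> (\<forall>u\<in>V. \<forall>v\<in>V. u + v \<noteq> b) \<and> open W \<and> 0 \<in> W \<and>
    (\<forall>u\<in>W. \<forall>v\<in>W. u + v \<in> V) \<and> (\<forall>S c. finite S \<and> S \<subseteq> A - G \<longrightarrow> (\<Sum>x\<in>S. c x *\<^sub>R x) \<in> W))"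
    by (intro ballI)
  from bchoice[OF this] obtain G where G0: "\<forall>b\<in>A - {0}. finite (G b) \<and> (\<exists>V W. open V \<and> 0 \<in> V \<and> (\<forall>u\<in>V. \<forall>v\<in>V. u + v \<noteq> b) \<and> open W \<and> 0 \<in> W \<and>
    (\<forall>u\<in>W. \<forall>v\<in>W. u + v \<in> V) \<and> (\<forall>S c. finite S \<and> S \<subseteq> A - G b \<longrightarrow> (\<Sum>x\<in>S. c x *\<^sub>R x) \<in> W))" ..
  note G = G0[rule_format]
  define pk where "pk B = (SOME x. x \<in> A \<and> x \<notin> B)" for B
  have pk: "pk B \<in> A \<and> pk B \<notin> B" if "finite B" for B
  proof -
    have "infinite (A - B)" using inf that by (simp add: Diff_infinite_finite)
    hence "\<exists>x. x \<in> A \<and> x \<notin> B" by (metis Diff_iff finite.emptyI ex_in_conv)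
    thus ?thesis unfolding pk_def by (rule someI_ex)
  qed
  define forb where "forb = rec_nat {0} (\<lambda>n B. B \<union> {pk B} \<union> G (pk B))"
  have forb0: "forb 0 = {0}" and forbS: "\<And>n. forb (Suc n) = forb n \<union> {pk (forb n)} \<union> G (pk (forb n))"
    by (simp_all add: forb_def)
  define a where "a n = pk (forb n)" for n
  have fin: "finite (forb n) \<and> 0 \<in> forb n" for n
  proof (induction n)
    case 0 then show ?case by (simp add: forb0)
  next
    case (Suc n)
    have "pk (forb n) \<in> A \<and> pk (forb n) \<notin> forb n" using pk Suc by blast
    hence "pk (forb n) \<in> A - {0}" using Suc by auto
    hence "finite (G (pk (forb n)))" using G by blast
    thus ?case using Suc by (simp add: forbS)
  qed
  have aA: "a n \<in> A" "a n \<noteq> 0" "a n \<notin> forb n" for n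
    using pk[of "forb n"] fin[of n] unfolding a_def by auto
  have mono: "forb n \<subseteq> forb m" if "n \<le> m" for n m
    using lift_Suc_mono_le[of forb, OF _ that] forbS by blast
  have later: "a m \<notin> G (a n) \<and> a m \<noteq> a n" if "n < m" for n m
  proof -
    have "forb (Suc n) \<subseteq> forb m" using that mono by simp
    moreover have "{a n} \<union> G (a n) \<subseteq> forb (Suc n)" unfolding a_def forbS by blast
    ultimately show ?thesis using aA(3)[of m] by blast
  qed
  have inj: "inj a"
  proof (rule injI)
    fix x y assume "a x = a y"
    thus "x = y" using later[of x y] later[of y x] by (metis linorder_neqE_nat)
  qed
  have part1: "\<exists>V W. open V \<and> 0 \<in> V \<and> (\<forall>u\<in>V. \<forall>v\<in>V. u + v \<noteq> a n) \<and> open W \<and> 0 \<in> W \<and>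
    (\<forall>u\<in>W. \<forall>v\<in>W. u + v \<in> V) \<and> (\<forall>S c. finite S \<and> S \<subseteq> {n<..} \<longrightarrow> (\<Sum>m\<in>S. c m *\<^sub>R a m) \<in> W)" for n
  proof -
    have an: "a n \<in> A - {0}" using aA by simp
    from conjunct2[OF G[OF an]] obtain V where "\<exists>W. open V \<and> 0 \<in> V \<and> (\<forall>u\<in>V. \<forall>v\<in>V. u + v \<noteq> a n) \<and> open W \<and> 0 \<in> W \<and>
      (\<forall>u\<in>W. \<forall>v\<in>W. u + v \<in> V) \<and> (\<forall>S c. finite S \<and> S \<subseteq> A - G (a n) \<longrightarrow> (\<Sum>x\<in>S. c x *\<^sub>R x) \<in> W)" ..
    then obtain W where VW0: "open V \<and> 0 \<in> V \<and> (\<forall>u\<in>V. \<forall>v\<in>V. u + v \<noteq> a n) \<and> open W \<and> 0 \<in> W \<and>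
      (\<forall>u\<in>W. \<forall>v\<in>W. u + v \<in> V) \<and> (\<forall>S c. finite S \<and> S \<subseteq> A - G (a n) \<longrightarrow> (\<Sum>x\<in>S. c x *\<^sub>R x) \<in> W)" ..
    note VW = VW0[THEN conjunct1] VW0[THEN conjunct2, THEN conjunct1]
       VW0[THEN conjunct2, THEN conjunct2, THEN conjunct1]
       VW0[THEN conjunct2, THEN conjunct2, THEN conjunct2, THEN conjunct1]
       VW0[THEN conjunct2, THEN conjunct2, THEN conjunct2, THEN conjunct2, THEN conjunct1]
       VW0[THEN conjunct2, THEN conjunct2, THEN conjunct2, THEN conjunct2, THEN conjunct2, THEN conjunct1]
       VW0[THEN conjunct2, THEN conjunct2, THEN conjunct2, THEN conjunct2, THEN conjunct2, THEN conjunct2]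
    have "(\<Sum>m\<in>S. c m *\<^sub>R a m) \<in> W" if "finite S" "S \<subseteq> {n<..}" for S c
    proof -
      have "a ` S \<subseteq> A - G (a n)" using that later aA by auto
      thus ?thesis using VW(7) that reindex_comb[OF inj, of c S] by simp
    qed
    thus ?thesis using VW by blast
  qed
  have part2: "\<exists>N. \<forall>S c. finite S \<and> S \<subseteq> {N..} \<longrightarrow> (\<Sum>m\<in>S. c m *\<^sub>R a m) \<in> U"
    if UU: "open U" "0 \<in> U" for U
  proof -
    obtain F where F: "finite F" "F \<subseteq> A" "\<forall>S c. finite S \<and> S \<subseteq> A - F \<longrightarrow> (\<Sum>x\<in>S. c x *\<^sub>R x) \<in> U"
      using acs'[OF UU] by blast
    have "finite (a -` F)" using F(1) inj by (simp add: finite_vimageI)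
    then obtain N where N: "\<forall>m\<in>a -` F. m < N" using finite_nat_set_iff_bounded by blast
    have "(\<Sum>m\<in>S. c m *\<^sub>R a m) \<in> U" if "finite S" "S \<subseteq> {N..}" for S c
    proof -
      have "a ` S \<subseteq> A - F"
      proof (rule subsetI)
        fix y assume "y \<in> a ` S"
        then obtain m where m: "m \<in> S" "y = a m" by blast
        hence Nm: "N \<le> m" using that(2) by auto
        have "a m \<notin> F"
        proof
          assume "a m \<in> F" hence "m < N" using N by simp
          thus False using Nm by simp
        qed
        thus "y \<in> A - F" using m aA(1) by simp
      qed
      thus ?thesis using F(3) that reindex_comb[OF inj, of c S] by simp
    qed
    thus ?thesis by blast
  qed
  have "good_seq a" unfolding good_seq_def
  proof (intro conjI allI impI)
    fix n show "\<exists>V W. open V \<and> 0 \<in> V \<and> (\<forall>u\<in>V. \<forall>v\<in>V. u + v \<noteq> a n) \<and> open W \<and> 0 \<in> W \<and>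
    (\<forall>u\<in>W. \<forall>v\<in>W. u + v \<in> V) \<and> (\<forall>S c. finite S \<and> S \<subseteq> {n<..} \<longrightarrow> (\<Sum>m\<in>S. c m *\<^sub>R a m) \<in> W)"
      by (rule part1)
  next
    fix U :: "'a set" assume "open U \<and> 0 \<in> U"
    thus "\<exists>N. \<forall>S c. finite S \<and> S \<subseteq> {N..} \<longrightarrow> (\<Sum>m\<in>S. c m *\<^sub>R a m) \<in> U"
      using part2 by simp
  qed
  thus ?thesis by blast
qed

end

definition ps :: "(nat \<Rightarrow> 'a::real_vector) \<Rightarrow> nat \<Rightarrow> (nat \<Rightarrow> real) \<Rightarrow> 'a" where
  "ps a N x = (\<Sum>n<N. x n *\<^sub>R a n)"

definition Phi :: "(nat \<Rightarrow> 'a::{real_vector,t2_space}) \<Rightarrow> (nat \<Rightarrow> real) \<Rightarrow> 'a" where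
  "Phi a x = Lim sequentially (\<lambda>N. ps a N x)"

lemma ps_add: "ps a N (\<lambda>n. x n + y n) = ps a N x + ps a N y"
  unfolding ps_def by (simp add: scaleR_add_left sum.distrib)

lemma ps_scale: "ps a N (\<lambda>n. c * x n) = c *\<^sub>R ps a N x"
  unfolding ps_def by (simp add: scaleR_sum_right)

lemma ps_Suc: "ps a (Suc n) x = ps a n x + x n *\<^sub>R a n"
  unfolding ps_def by simp

lemma ps_diff: "M \<le> K \<Longrightarrow> ps a K x - ps a M x = (\<Sum>n\<in>{M..<K}. x n *\<^sub>R a n)"
  unfolding ps_def lessThan_atLeast0
  by (metis (no_types, lifting) add_diff_cancel_left' sum.atLeastLessThan_concat zero_le)

locale gs =
  fixes dummy :: "'a::{real_vector, topological_monoid_add, t2_space} itself"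
    and a :: "nat \<Rightarrow> 'a" and S :: "(nat \<Rightarrow> real) set"
  assumes sc: "continuous_on UNIV (\<lambda>p::real \<times> 'a. fst p *\<^sub>R snd p)"
    and good: "good_seq a"
    and conv: "\<And>x. x \<in> S \<Longrightarrow> \<exists>L. ((\<lambda>N. ps a N x) \<longlongrightarrow> L) sequentially"
    and Sadd: "\<And>x y. x \<in> S \<Longrightarrow> y \<in> S \<Longrightarrow> (\<lambda>n. x n + y n) \<in> S"
    and Ssc: "\<And>c x. x \<in> S \<Longrightarrow> (\<lambda>n. c * x n) \<in> S"
begin

lemma gs1: "\<exists>V W. open V \<and> 0 \<in> V \<and> (\<forall>u\<in>V. \<forall>v\<in>V. u + v \<noteq> a n) \<and> open W \<and> 0 \<in> W \<and>
    (\<forall>u\<in>W. \<forall>v\<in>W. u + v \<in> V) \<and> (\<forall>S c. finite S \<and> S \<subseteq> {n<..} \<longrightarrow> (\<Sum>m\<in>S. c m *\<^sub>R a m) \<in> W)"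
  using good unfolding good_seq_def by (rule conjunct1[THEN spec])

lemma gs2: "open U \<Longrightarrow> 0 \<in> U \<Longrightarrow> \<exists>N. \<forall>S c. finite S \<and> S \<subseteq> {N..} \<longrightarrow> (\<Sum>m\<in>S. c m *\<^sub>R a m) \<in> U"
  using good unfolding good_seq_def by simp

lemma Sdiff: "x \<in> S \<Longrightarrow> y \<in> S \<Longrightarrow> (\<lambda>n. x n - y n) \<in> S"
  using Sadd[of x "\<lambda>n. (-1) * y n"] Ssc[of y "-1"] by simp

lemma Phi_lim: "x \<in> S \<Longrightarrow> ((\<lambda>N. ps a N x) \<longlongrightarrow> Phi a x) sequentially"
  using conv[of x] unfolding Phi_def by (metis tendsto_Lim trivial_limit_sequentially)

lemma Phi_add: "x \<in> S \<Longrightarrow> y \<in> S \<Longrightarrow> Phi a (\<lambda>n. x n + y n) = Phi a x + Phi a y"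
  unfolding Phi_def ps_add
  by (rule tendsto_Lim[OF trivial_limit_sequentially], rule tendsto_add, (rule Phi_lim[unfolded Phi_def], assumption)+)

lemma Phi_scale: "x \<in> S \<Longrightarrow> Phi a (\<lambda>n. c * x n) = c *\<^sub>R Phi a x"
  unfolding Phi_def ps_scale
  by (rule tendsto_Lim[OF trivial_limit_sequentially], rule tendsto_scaleR'[OF sc tendsto_const],
      rule Phi_lim[unfolded Phi_def], assumption)

lemma Phi_diff: "x \<in> S \<Longrightarrow> y \<in> S \<Longrightarrow> Phi a (\<lambda>n. x n - y n) = Phi a x - Phi a y"
  using Phi_add[of x "\<lambda>n. (-1) * y n"] Phi_scale[of y "-1"] Ssc[of y "-1"] by simp

lemma tail_in:
  assumes x: "x \<in> S" and W: "open W" "0 \<in> W" "\<And>u v. u \<in> W \<Longrightarrow> v \<in> W \<Longrightarrow> u + v \<in> V"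
    and N: "\<forall>T c. finite T \<and> T \<subseteq> {N..} \<longrightarrow> (\<Sum>m\<in>T. c m *\<^sub>R a m) \<in> W"
  shows "Phi a x - ps a N x \<in> V"
proof (rule closure_lemma[OF sc _ _ W])
  show "((\<lambda>M. ps a M x - ps a N x) \<longlongrightarrow> Phi a x - ps a N x) sequentially"
    by (rule tendsto_diff'[OF sc Phi_lim[OF x] tendsto_const])
  show "eventually (\<lambda>M. ps a M x - ps a N x \<in> W) sequentially"
    unfolding eventually_sequentially
  proof (intro exI allI impI)
    fix M assume "N \<le> M"
    hence "ps a M x - ps a N x = (\<Sum>n\<in>{N..<M}. x n *\<^sub>R a n)" by (rule ps_diff)
    moreover have "(\<Sum>n\<in>{N..<M}. x n *\<^sub>R a n) \<in> W"
    proof -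
      have sub: "{N..<M} \<subseteq> {N..}" by (rule subsetI) simp
      show ?thesis using N[rule_format, of "{N..<M}" x] sub by simp
    qed
    ultimately show "ps a M x - ps a N x \<in> W" by simp
  qed
qed

definition "R n x = Phi a x - ps a (Suc n) x"

lemma R_scale: "x \<in> S \<Longrightarrow> R n (\<lambda>k. c * x k) = c *\<^sub>R R n x"
  unfolding R_def Phi_scale ps_scale by (simp add: scaleR_diff_right)

lemma R_decomp: "x \<in> S \<Longrightarrow> Phi a x = ps a n x + x n *\<^sub>R a n + R n x"
  unfolding R_def ps_Suc by simp

lemma Q: "\<exists>Wb. open Wb \<and> 0 \<in> Wb \<and> (\<forall>x\<in>S. \<forall>t. t *\<^sub>R a n + R n x \<in> Wb \<longrightarrow> \<bar>t\<bar> < 1)"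
proof -
  from gs1[of n] obtain V where "\<exists>W. open V \<and> 0 \<in> V \<and> (\<forall>u\<in>V. \<forall>v\<in>V. u + v \<noteq> a n) \<and> open W \<and> 0 \<in> W \<and>
    (\<forall>u\<in>W. \<forall>v\<in>W. u + v \<in> V) \<and> (\<forall>S c. finite S \<and> S \<subseteq> {n<..} \<longrightarrow> (\<Sum>m\<in>S. c m *\<^sub>R a m) \<in> W)" ..
  then obtain W where VW: "open V \<and> 0 \<in> V \<and> (\<forall>u\<in>V. \<forall>v\<in>V. u + v \<noteq> a n) \<and> open W \<and> 0 \<in> W \<and>
    (\<forall>u\<in>W. \<forall>v\<in>W. u + v \<in> V) \<and> (\<forall>S c. finite S \<and> S \<subseteq> {n<..} \<longrightarrow> (\<Sum>m\<in>S. c m *\<^sub>R a m) \<in> W)" ..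
  have Rin: "R n x \<in> V" if "x \<in> S" for x
    unfolding R_def
  proof (rule tail_in[OF that])
    show "open W" "0 \<in> W" using VW by simp_all
    show "\<And>u v. u \<in> W \<Longrightarrow> v \<in> W \<Longrightarrow> u + v \<in> V" using VW by simp
    show "\<forall>T c. finite T \<and> T \<subseteq> {Suc n..} \<longrightarrow> (\<Sum>m\<in>T. c m *\<^sub>R a m) \<in> W"
    proof (intro allI impI)
      fix T and c :: "nat \<Rightarrow> real" assume "finite T \<and> T \<subseteq> {Suc n..}"
      hence "finite T \<and> T \<subseteq> {n<..}" by auto
      thus "(\<Sum>m\<in>T. c m *\<^sub>R a m) \<in> W" using VW by blast
    qed
  qed
  obtain Wb where Wb: "open Wb" "0 \<in> Wb" "\<And>t v. \<bar>t\<bar> \<le> 1 \<Longrightarrow> v \<in> Wb \<Longrightarrow> t *\<^sub>R v \<in> V"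
    using open_balanced[OF sc, of V] VW by blast
  have "\<bar>t\<bar> < 1" if x: "x \<in> S" and t: "t *\<^sub>R a n + R n x \<in> Wb" for x t
  proof (rule ccontr)
    assume "\<not> \<bar>t\<bar> < 1"
    hence t1: "\<bar>t\<bar> \<ge> 1" "t \<noteq> 0" by auto
    have "(1/t) *\<^sub>R (t *\<^sub>R a n + R n x) \<in> V" using Wb(3)[OF _ t] t1 by (simp add: abs_divide)
    moreover have "(1/t) *\<^sub>R (t *\<^sub>R a n + R n x) = a n + R n (\<lambda>k. (1/t) * x k)"
      unfolding R_scale[OF x] scaleR_add_right scaleR_scaleR using t1 by simp
    ultimately have 1: "a n + R n (\<lambda>k. (1/t) * x k) \<in> V" by simp
    have 2: "R n (\<lambda>k. (-1/t) * x k) \<in> V" using Rin Ssc[OF x] by blast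
    have "a n + R n (\<lambda>k. (1/t) * x k) + R n (\<lambda>k. (-1/t) * x k) = a n"
      unfolding R_scale[OF x] by (simp add: scaleR_add_left[symmetric])
    thus False using 1 2 VW by metis
  qed
  thus ?thesis using Wb by blast
qed

lemma D: "\<forall>e>0. \<exists>U. open U \<and> 0 \<in> U \<and> (\<forall>x\<in>S. Phi a x \<in> U \<longrightarrow> (\<forall>j<i. \<bar>x j\<bar> < e))"
proof (induction i)
  case 0
  then show ?case by (intro allI impI exI[of _ UNIV]) auto
next
  case (Suc i)
  show ?case
  proof (intro allI impI)
    fix e :: real assume e: "e > 0"
    from Q[of i] obtain Wb where Wb': "open Wb \<and> 0 \<in> Wb \<and> (\<forall>x\<in>S. \<forall>t. t *\<^sub>R a i + R i x \<in> Wb \<longrightarrow> \<bar>t\<bar> < 1)" ..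
    note Wb = Wb'[THEN conjunct1] Wb'[THEN conjunct2, THEN conjunct1] Wb'[THEN conjunct2, THEN conjunct2]
    define We where "We = {y. (1/e) *\<^sub>R y \<in> Wb}"
    have We: "open We" "0 \<in> We" unfolding We_def using open_scaled[OF sc Wb(1)] Wb(2) by auto
    obtain Z where Z: "open Z" "0 \<in> Z" "\<And>x y. x \<in> Z \<Longrightarrow> y \<in> Z \<Longrightarrow> x + y \<in> We"
      using open_half[OF sc We] by blast
    define Z' where "Z' = {y. (-1) *\<^sub>R y \<in> Z}"
    have Z': "open Z'" "0 \<in> Z'" unfolding Z'_def using open_scaled[OF sc Z(1), of "-1"] Z(2) by auto
    from head_lemma[OF sc Z', of i a] obtain d where d': "d > 0 \<and> (\<forall>c. (\<forall>j<i. \<bar>c j\<bar> < d) \<longrightarrow> (\<Sum>j<i. c j *\<^sub>R a j) \<in> Z')" ..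
    note d = d'[THEN conjunct1] d'[THEN conjunct2]
    have md: "min e d > 0" using e d by simp
    from Suc.IH[rule_format, OF md] obtain U0 where U0': "open U0 \<and> 0 \<in> U0 \<and> (\<forall>x\<in>S. Phi a x \<in> U0 \<longrightarrow> (\<forall>j<i. \<bar>x j\<bar> < min e d))" ..
    note U0 = U0'[THEN conjunct1] U0'[THEN conjunct2, THEN conjunct1] U0'[THEN conjunct2, THEN conjunct2]
    show "\<exists>U. open U \<and> 0 \<in> U \<and> (\<forall>x\<in>S. Phi a x \<in> U \<longrightarrow> (\<forall>j<Suc i. \<bar>x j\<bar> < e))"
    proof (intro exI[of _ "U0 \<inter> Z"] conjI ballI impI allI)
      show "open (U0 \<inter> Z)" using U0 Z by auto
      show "0 \<in> U0 \<inter> Z" using U0 Z by auto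
      fix x j assume x: "x \<in> S" and Px: "Phi a x \<in> U0 \<inter> Z" and j: "j < Suc i"
      have small: "\<forall>j<i. \<bar>x j\<bar> < min e d" using U0(3) x Px by blast
      hence "ps a i x \<in> Z'" using d(2) unfolding ps_def by simp
      hence "(-1) *\<^sub>R ps a i x \<in> Z" unfolding Z'_def by simp
      hence "Phi a x + (-1) *\<^sub>R ps a i x \<in> We" using Z(3) Px by blast
      hence "(1/e) *\<^sub>R (Phi a x + (-1) *\<^sub>R ps a i x) \<in> Wb" unfolding We_def by simp
      moreover have "(1/e) *\<^sub>R (Phi a x + (-1) *\<^sub>R ps a i x) = (x i / e) *\<^sub>R a i + R i (\<lambda>k. (1/e) * x k)"
        unfolding R_scale[OF x] R_decomp[OF x, of i] by (simp add: scaleR_add_right)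
      ultimately have h: "(x i / e) *\<^sub>R a i + R i (\<lambda>k. (1/e) * x k) \<in> Wb" by simp
      have "\<bar>x i / e\<bar> < 1" by (rule Wb(3)[rule_format, OF Ssc[OF x, of "1/e"] h])
      hence "\<bar>x i\<bar> < e" using e by (simp add: abs_divide)
      thus "\<bar>x j\<bar> < e" using small j by (metis less_Suc_eq min_less_iff_conj)
    qed
  qed
qed

lemma Phi_inj: "inj_on (Phi a) S"
proof (rule inj_onI)
  fix x y assume x: "x \<in> S" and y: "y \<in> S" and eq: "Phi a x = Phi a y"
  have "Phi a (\<lambda>n. x n - y n) = 0" using Phi_diff[OF x y] eq by simp
  show "x = y"
  proof
    fix i
    have "\<bar>x i - y i\<bar> < e" if "e > 0" for e
    proof -
      from D[of "Suc i", rule_format, OF that] obtain U where "open U \<and> 0 \<in> U \<and> (\<forall>x\<in>S. Phi a x \<in> U \<longrightarrow> (\<forall>j<Suc i. \<bar>x j\<bar> < e))" ..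
      thus ?thesis using Sdiff[OF x y] \<open>Phi a (\<lambda>n. x n - y n) = 0\<close> by fastforce
    qed
    hence "\<bar>x i - y i\<bar> \<le> 0" by (metis field_le_epsilon less_imp_le add_0)
    thus "x i = y i" by simp
  qed
qed

end

context gs begin

lemma Phi_cont: "continuous_on S (Phi a)"
  unfolding continuous_on_def
proof (intro ballI)
  fix x0 assume x0: "x0 \<in> S"
  show "(Phi a \<longlongrightarrow> Phi a x0) (at x0 within S)"
    unfolding tendsto_def
  proof (intro allI impI)
    fix V assume V: "open V" "Phi a x0 \<in> V"
    define U where "U = {z. z + Phi a x0 \<in> V}"
    have U: "open U" "0 \<in> U" unfolding U_def using open_translate[OF sc, of V "Phi a x0"] V by auto
    obtain U1 where U1: "open U1" "0 \<in> U1" "\<And>x y. x \<in> U1 \<Longrightarrow> y \<in> U1 \<Longrightarrow> x + y \<in> U"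
      using open_half[OF sc U] by blast
    obtain W2 where W2: "open W2" "0 \<in> W2" "\<And>x y. x \<in> W2 \<Longrightarrow> y \<in> W2 \<Longrightarrow> x + y \<in> U1"
      using open_half[OF sc U1(1,2)] by blast
    from gs2[OF W2(1,2)] obtain N where N: "\<forall>T c. finite T \<and> T \<subseteq> {N..} \<longrightarrow> (\<Sum>m\<in>T. c m *\<^sub>R a m) \<in> W2" ..
    from head_lemma[OF sc U1(1,2), of N a] obtain d where d': "d > 0 \<and> (\<forall>c. (\<forall>j<N. \<bar>c j\<bar> < d) \<longrightarrow> (\<Sum>j<N. c j *\<^sub>R a j) \<in> U1)" ..
    define Ob where "Ob = (\<Inter>j\<in>{..<N}. (\<lambda>x::nat\<Rightarrow>real. x j) -` ball (x0 j) d)"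
    have "open Ob" unfolding Ob_def
      by (intro open_INT ballI finite_lessThan open_vimage_UNIV[OF continuous_on_product_coordinates] open_ball)
    moreover have "x0 \<in> Ob" unfolding Ob_def using d' by auto
    moreover have "Phi a x \<in> V" if x: "x \<in> Ob" "x \<in> S" for x
    proof -
      define y where "y = (\<lambda>n. x n - x0 n)"
      have y: "y \<in> S" unfolding y_def using Sdiff[OF x(2) x0] .
      have "\<forall>j<N. \<bar>y j\<bar> < d" using x(1) unfolding Ob_def y_def by (auto simp: dist_real_def abs_minus_commute)
      hence "ps a N y \<in> U1" using d' unfolding ps_def by blast
      moreover have "Phi a y - ps a N y \<in> U1" by (rule tail_in[OF y W2 N])
      ultimately have "ps a N y + (Phi a y - ps a N y) \<in> U" using U1(3) by blast
      hence "Phi a y \<in> U" by simp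
      moreover have "Phi a y = Phi a x - Phi a x0" unfolding y_def by (rule Phi_diff[OF x(2) x0])
      ultimately show ?thesis unfolding U_def by simp
    qed
    ultimately show "eventually (\<lambda>x. Phi a x \<in> V) (at x0 within S)"
      unfolding eventually_at_topological by blast
  qed
qed

lemma inv_cont: "continuous_on (Phi a ` S) (inv_into S (Phi a))"
proof (rule continuous_on_coordinatewise_then_product)
  fix i
  show "continuous_on (Phi a ` S) (\<lambda>y. inv_into S (Phi a) y i)"
    unfolding continuous_on_def
  proof (intro ballI)
    fix y0 assume "y0 \<in> Phi a ` S"
    then obtain x0 where x0: "x0 \<in> S" "y0 = Phi a x0" by blast
    show "((\<lambda>y. inv_into S (Phi a) y i) \<longlongrightarrow> inv_into S (Phi a) y0 i) (at y0 within Phi a ` S)"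
      unfolding tendsto_iff
    proof (intro allI impI)
      fix e :: real assume e: "e > 0"
      from D[of "Suc i", rule_format, OF e] obtain U where U': "open U \<and> 0 \<in> U \<and> (\<forall>x\<in>S. Phi a x \<in> U \<longrightarrow> (\<forall>j<Suc i. \<bar>x j\<bar> < e))" ..
      define Ob where "Ob = {z. z + (- y0) \<in> U}"
      have "open Ob" unfolding Ob_def using open_translate[OF sc, of U "-y0"] U' by simp
      moreover have "y0 \<in> Ob" unfolding Ob_def using U' by simp
      moreover have "dist (inv_into S (Phi a) y i) (inv_into S (Phi a) y0 i) < e"
        if y: "y \<in> Ob" "y \<in> Phi a ` S" for y
      proof -
        obtain x where x: "x \<in> S" "y = Phi a x" using y(2) by blast
        have "Phi a (\<lambda>n. x n - x0 n) = y + (- y0)" using Phi_diff[OF x(1) x0(1)] x x0 by simp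
        hence "Phi a (\<lambda>n. x n - x0 n) \<in> U" using y(1) unfolding Ob_def by simp
        hence "\<bar>x i - x0 i\<bar> < e" using U' Sdiff[OF x(1) x0(1)] by auto
        thus ?thesis using x x0 Phi_inj by (simp add: dist_real_def)
      qed
      ultimately show "eventually (\<lambda>y. dist (inv_into S (Phi a) y i) (inv_into S (Phi a) y0 i) < e) (at y0 within Phi a ` S)"
        unfolding eventually_at_topological by blast
    qed
  qed
qed

lemma Phi_homeo: "homeomorphism S (Phi a ` S) (Phi a) (inv_into S (Phi a))"
  unfolding homeomorphism_def
  using Phi_cont inv_cont Phi_inj by (auto simp: inv_into_image_cancel)

end

lemma fin_supp_add: "x \<in> fin_supp \<Longrightarrow> y \<in> fin_supp \<Longrightarrow> (\<lambda>n. x n + y n :: 'b::monoid_add) \<in> fin_supp"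
  unfolding fin_supp_def
  by (rule CollectI, rule finite_subset[of _ "{n. x n \<noteq> 0} \<union> {n. y n \<noteq> 0}"]) auto

lemma fin_supp_mult: "x \<in> fin_supp \<Longrightarrow> (\<lambda>n. c * x n :: 'b::mult_zero) \<in> fin_supp"
  unfolding fin_supp_def
  by (rule CollectI, rule finite_subset[of _ "{n. x n \<noteq> 0}"]) auto

lemma fin_supp_zero: "(\<lambda>n. 0) \<in> fin_supp"
  unfolding fin_supp_def by simp

lemma fin_supp_sum:
  "finite M \<Longrightarrow> (\<forall>m\<in>M. d m \<in> fin_supp) \<Longrightarrow> (\<lambda>n. \<Sum>m\<in>M. k m * d m n :: 'b::comm_ring_1) \<in> fin_supp"
proof (induction M rule: finite_induct)
  case empty then show ?case by (simp add: fin_supp_zero)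
next
  case (insert m M)
  then show ?case by (simp add: fin_supp_add fin_supp_mult)
qed

lemma ii_iii:
  fixes f :: "(nat \<Rightarrow> int) \<Rightarrow> 'b::{real_vector, topological_space}"
  assumes add: "\<forall>x\<in>fin_supp. \<forall>y\<in>fin_supp. f (\<lambda>n. x n + y n) = f x + f y"
    and hom: "homeomorphism fin_supp (f ` fin_supp) f g"
  shows "\<exists>A::'b set. infinite A \<and> abs_cauchy_summable A"
proof -
  have gf: "\<And>x. x \<in> fin_supp \<Longrightarrow> g (f x) = x" and fc: "continuous_on fin_supp f"
    using hom unfolding homeomorphism_def by auto
  have injf: "inj_on f fin_supp" by (metis gf inj_onI)
  define z0 where "z0 = (\<lambda>n::nat. 0::int)"
  have z0: "z0 \<in> fin_supp" unfolding z0_def by (rule fin_supp_zero)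
  have fz0: "f z0 = 0"
  proof -
    have "f (\<lambda>n. z0 n + z0 n) = f z0 + f z0" using add[rule_format, OF z0 z0] by simp
    moreover have "(\<lambda>n. z0 n + z0 n) = z0" unfolding z0_def by simp
    ultimately show ?thesis by simp
  qed
  have fneg: "f (\<lambda>n. - x n) = - f x" if x: "x \<in> fin_supp" for x
  proof -
    have nx: "(\<lambda>n. - x n) \<in> fin_supp" using fin_supp_mult[OF x, of "-1"] by simp
    have "f (\<lambda>n. x n + - x n) = f x + f (\<lambda>n. - x n)" using add[rule_format, OF x nx] by simp
    moreover have "(\<lambda>n. x n + - x n) = z0" unfolding z0_def by simp
    ultimately have "f x + f (\<lambda>n. - x n) = 0" using fz0 by simp
    thus ?thesis by (simp add: eq_neg_iff_add_eq_0 add.commute)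
  qed
  have fnat: "f (\<lambda>n. int m * x n) = real m *\<^sub>R f x" if x: "x \<in> fin_supp" for x m
  proof (induction m)
    case 0
    then show ?case using fz0 unfolding z0_def by simp
  next
    case (Suc m)
    have "f (\<lambda>n. int m * x n + x n) = f (\<lambda>n. int m * x n) + f x"
      using add[rule_format, OF fin_supp_mult[OF x, of "int m"] x] by simp
    moreover have "(\<lambda>n. int (Suc m) * x n) = (\<lambda>n. int m * x n + x n)" by (simp add: algebra_simps)
    ultimately show ?case using Suc by (simp add: algebra_simps)
  qed
  have fsm: "f (\<lambda>n. k * x n) = of_int k *\<^sub>R f x" if x: "x \<in> fin_supp" for x k
  proof (cases k rule: int_cases2)
    case (nonneg m)
    then show ?thesis using fnat[OF x] by simp
  next
    case (nonpos m)
    have "f (\<lambda>n. k * x n) = f (\<lambda>n. - (int m * x n))" using nonpos by simp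
    also have "\<dots> = - f (\<lambda>n. int m * x n)" by (rule fneg[OF fin_supp_mult[OF x]])
    finally show ?thesis using fnat[OF x] nonpos by simp
  qed
  have fsum: "f (\<lambda>n. \<Sum>m\<in>M. k m * d m n) = (\<Sum>m\<in>M. of_int (k m) *\<^sub>R f (d m))"
    if "finite M" "\<forall>m\<in>M. d m \<in> fin_supp" for M and d :: "nat \<Rightarrow> nat \<Rightarrow> int" and k
    using that
  proof (induction M rule: finite_induct)
    case empty then show ?case using fz0 unfolding z0_def by simp
  next
    case (insert m M)
    have dm: "d m \<in> fin_supp" using insert by simp
    have s1: "(\<lambda>n. k m * d m n) \<in> fin_supp" by (rule fin_supp_mult[OF dm])
    have s2: "(\<lambda>n. \<Sum>m\<in>M. k m * d m n) \<in> fin_supp" by (rule fin_supp_sum) (use insert in auto)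
    have "f (\<lambda>n. \<Sum>m\<in>insert m M. k m * d m n) = f (\<lambda>n. k m * d m n + (\<Sum>m\<in>M. k m * d m n))"
      using insert by simp
    also have "\<dots> = f (\<lambda>n. k m * d m n) + f (\<lambda>n. \<Sum>m\<in>M. k m * d m n)"
      using add[rule_format, OF s1 s2] by simp
    also have "\<dots> = of_int (k m) *\<^sub>R f (d m) + (\<Sum>m\<in>M. of_int (k m) *\<^sub>R f (d m))"
      using fsm[OF dm] insert by simp
    finally show ?case using insert by simp
  qed
  define dl where "dl m = (\<lambda>n::nat. if n = m then 1 else (0::int))" for m
  have dl: "dl m \<in> fin_supp" for m unfolding fin_supp_def dl_def by simp
  have injdl: "inj dl" by (rule injI) (metis dl_def zero_neq_one)
  define h where "h m = f (dl m)" for m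
  have injh: "inj h" unfolding h_def using injdl injf dl by (simp add: inj_def inj_on_def)
  define A where "A = range h"
  have infA: "infinite A" unfolding A_def by (rule range_inj_infinite[OF injh])
  have "abs_cauchy_summable A" unfolding abs_cauchy_summable_def
  proof (intro allI impI)
    fix U :: "'b set" assume U: "open U \<and> 0 \<in> U"
    have "(f \<longlongrightarrow> f z0) (at z0 within fin_supp)" using fc z0 unfolding continuous_on_def by blast
    hence "eventually (\<lambda>x. f x \<in> U) (at z0 within fin_supp)" using U fz0 unfolding tendsto_def by simp
    then obtain Ob where Ob: "open Ob" "z0 \<in> Ob" "\<forall>x\<in>Ob. x \<in> fin_supp \<longrightarrow> x \<noteq> z0 \<longrightarrow> f x \<in> U"
      unfolding eventually_at_topological by blast
    have "openin (product_topology (\<lambda>i. euclidean) UNIV) Ob" using Ob(1) unfolding open_fun_def .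
    from product_topology_open_contains_basis[OF this Ob(2)]
    obtain X where X: "z0 \<in> (\<Pi>\<^sub>E i\<in>UNIV. X i)" "finite {i. X i \<noteq> UNIV}" "(\<Pi>\<^sub>E i\<in>UNIV. X i) \<subseteq> Ob"
      by auto
    obtain N where N: "\<forall>i\<in>{i. X i \<noteq> UNIV}. i < N" using X(2) finite_nat_set_iff_bounded by blast
    have inOb: "x \<in> Ob" if "\<forall>n<N. x n = 0" for x
    proof -
      have "x i \<in> X i" for i
      proof (cases "i < N")
        case True
        then show ?thesis using that X(1) unfolding z0_def PiE_UNIV_domain by auto
      next
        case False
        then show ?thesis using N by auto
      qed
      hence "x \<in> (\<Pi>\<^sub>E i\<in>UNIV. X i)" unfolding PiE_UNIV_domain by auto
      thus ?thesis using X(3) by blast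
    qed
    define F where "F = h ` {..<N}"
    have "finite F" "F \<subseteq> A" unfolding F_def A_def by auto
    moreover have "int_span (A - F) \<subseteq> U"
    proof
      fix y assume "y \<in> int_span (A - F)"
      then obtain T k where T: "y = (\<Sum>a\<in>T. of_int (k a) *\<^sub>R a)" "finite T" "T \<subseteq> A - F"
        unfolding int_span_def by blast
      define M where "M = h -` T"
      have finM: "finite M" unfolding M_def using T(2) injh by (simp add: finite_vimageI)
      have TM: "T = h ` M" unfolding M_def using T(3) unfolding A_def by auto
      have MN: "m \<ge> N" if "m \<in> M" for m
      proof (rule ccontr)
        assume "\<not> m \<ge> N"
        hence "h m \<in> F" unfolding F_def by auto
        thus False using that T(3) unfolding M_def by auto
      qed
      have "y = (\<Sum>m\<in>M. of_int (k (h m)) *\<^sub>R h m)"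
        unfolding T(1) TM by (simp add: sum.reindex inj_on_subset[OF injh])
      also have "\<dots> = f (\<lambda>n. \<Sum>m\<in>M. k (h m) * dl m n)"
        using fsum[OF finM, of dl "\<lambda>m. k (h m)"] dl by (simp add: h_def)
      finally have yf: "y = f (\<lambda>n. \<Sum>m\<in>M. k (h m) * dl m n)" .
      have zs: "(\<lambda>n. \<Sum>m\<in>M. k (h m) * dl m n) \<in> fin_supp" by (rule fin_supp_sum[OF finM]) (simp add: dl)
      have "\<forall>n<N. (\<Sum>m\<in>M. k (h m) * dl m n) = 0"
      proof (intro allI impI)
        fix n assume "n < N"
        hence "\<forall>m\<in>M. dl m n = 0" using MN unfolding dl_def by fastforce
        thus "(\<Sum>m\<in>M. k (h m) * dl m n) = 0" by simp
      qed
      hence zO: "(\<lambda>n. \<Sum>m\<in>M. k (h m) * dl m n) \<in> Ob" by (rule inOb)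
      show "y \<in> U"
      proof (cases "(\<lambda>n. \<Sum>m\<in>M. k (h m) * dl m n) = z0")
        case True
        then show ?thesis using yf fz0 U by simp
      next
        case False
        then show ?thesis using yf Ob(3) zO zs by blast
      qed
    qed
    ultimately show "\<exists>F. finite F \<and> F \<subseteq> A \<and> int_span (A - F) \<subseteq> U" by blast
  qed
  thus ?thesis using infA by blast
qed

lemma i_ii:
  fixes f :: "(nat \<Rightarrow> real) \<Rightarrow> 'b::{real_vector, topological_space}"
  assumes add: "\<forall>x\<in>fin_supp. \<forall>y\<in>fin_supp. f (\<lambda>n. x n + y n) = f x + f y"
    and hom: "homeomorphism fin_supp (f ` fin_supp) f g"
  shows "\<exists>(f'::(nat \<Rightarrow> int) \<Rightarrow> 'b) g'.
              (\<forall>x\<in>fin_supp. \<forall>y\<in>fin_supp. f' (\<lambda>n. x n + y n) = f' x + f' y) \<and>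
              homeomorphism fin_supp (f' ` fin_supp) f' g'"
proof -
  have gf: "\<And>x. x \<in> fin_supp \<Longrightarrow> g (f x) = x" and fc: "continuous_on fin_supp f"
    and gc: "continuous_on (f ` fin_supp) g"
    using hom unfolding homeomorphism_def by auto
  define \<iota> where "\<iota> x = (\<lambda>n. real_of_int (x n))" for x :: "nat \<Rightarrow> int"
  have \<iota>S: "\<iota> x \<in> fin_supp" if "x \<in> fin_supp" for x
    using that unfolding fin_supp_def \<iota>_def by simp
  have \<iota>c: "continuous_on UNIV \<iota>"
    unfolding \<iota>_def
    by (intro continuous_on_coordinatewise_then_product continuous_on_of_int continuous_on_product_coordinates)
  define f' where "f' x = f (\<iota> x)" for x
  define g' where "g' y = (\<lambda>n. \<lfloor>g y n\<rfloor>)" for y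
  have g'f': "g' (f' x) = x" if "x \<in> fin_supp" for x
    unfolding g'_def f'_def using gf[OF \<iota>S[OF that]] by (simp add: \<iota>_def)
  have addf': "\<forall>x\<in>fin_supp. \<forall>y\<in>fin_supp. f' (\<lambda>n. x n + y n) = f' x + f' y"
  proof (intro ballI)
    fix x y :: "nat \<Rightarrow> int" assume x: "x \<in> fin_supp" and y: "y \<in> fin_supp"
    have "\<iota> (\<lambda>n. x n + y n) = (\<lambda>n. \<iota> x n + \<iota> y n)" unfolding \<iota>_def by simp
    thus "f' (\<lambda>n. x n + y n) = f' x + f' y"
      unfolding f'_def using add[rule_format, OF \<iota>S[OF x] \<iota>S[OF y]] by simp
  qed
  have f'c: "continuous_on fin_supp f'"
    unfolding f'_def
    by (rule continuous_on_compose2[OF fc continuous_on_subset[OF \<iota>c]]) (auto simp: \<iota>S)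
  have sub: "f' ` fin_supp \<subseteq> f ` fin_supp" unfolding f'_def using \<iota>S by auto
  have g'c: "continuous_on (f' ` fin_supp) g'"
    unfolding g'_def
  proof (rule continuous_on_coordinatewise_then_product)
    fix n
    have gn: "continuous_on (f' ` fin_supp) (\<lambda>y. g y n)"
      by (rule continuous_on_product_then_coordinatewise[OF continuous_on_subset[OF gc sub]])
    have intv: "\<exists>k. g y n = of_int k" if yS: "y \<in> f' ` fin_supp" for y
    proof -
      obtain x where "x \<in> fin_supp" "y = f' x" using yS by blast
      thus ?thesis unfolding f'_def using gf[OF \<iota>S] by (auto simp: \<iota>_def)
    qed
    show "continuous_on (f' ` fin_supp) (\<lambda>y. \<lfloor>g y n\<rfloor>)"
      unfolding continuous_on_def
    proof (intro ballI)
      fix y0 assume y0: "y0 \<in> f' ` fin_supp"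
      have "((\<lambda>y. g y n) \<longlongrightarrow> g y0 n) (at y0 within f' ` fin_supp)"
        using gn y0 unfolding continuous_on_def by blast
      hence "eventually (\<lambda>y. dist (g y n) (g y0 n) < 1/2) (at y0 within f' ` fin_supp)"
        unfolding tendsto_iff by (elim allE[of _ "1/2"]) simp
      hence ev: "eventually (\<lambda>y. y \<noteq> y0 \<longrightarrow> y \<in> f' ` fin_supp \<longrightarrow> dist (g y n) (g y0 n) < 1/2) (nhds y0)"
        unfolding eventually_at_filter .
      have "eventually (\<lambda>y. y \<noteq> y0 \<longrightarrow> y \<in> f' ` fin_supp \<longrightarrow> \<lfloor>g y n\<rfloor> = \<lfloor>g y0 n\<rfloor>) (nhds y0)"
      proof (rule eventually_mono[OF ev], intro impI)
        fix y assume h: "y \<noteq> y0 \<longrightarrow> y \<in> f' ` fin_supp \<longrightarrow> dist (g y n) (g y0 n) < 1/2"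
          and "y \<noteq> y0" and y: "y \<in> f' ` fin_supp"
        hence d: "dist (g y n) (g y0 n) < 1/2" by blast
        obtain k1 where k1: "g y n = of_int k1" using intv[OF y] by blast
        obtain k2 where k2: "g y0 n = of_int k2" using intv[OF y0] by blast
        have "\<bar>real_of_int (k1 - k2)\<bar> < 1/2" using d k1 k2 by (simp add: dist_real_def)
        hence "k1 = k2" by linarith
        thus "\<lfloor>g y n\<rfloor> = \<lfloor>g y0 n\<rfloor>" using k1 k2 by simp
      qed
      hence "eventually (\<lambda>y. \<lfloor>g y n\<rfloor> = \<lfloor>g y0 n\<rfloor>) (at y0 within f' ` fin_supp)"
        unfolding eventually_at_filter .
      thus "((\<lambda>y. \<lfloor>g y n\<rfloor>) \<longlongrightarrow> \<lfloor>g y0 n\<rfloor>) (at y0 within f' ` fin_supp)"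
        by (rule tendsto_eventually)
    qed
  qed
  have "homeomorphism fin_supp (f' ` fin_supp) f' g'"
    unfolding homeomorphism_def
  proof (intro conjI ballI)
    show "continuous_on fin_supp f'" by (rule f'c)
    show "continuous_on (f' ` fin_supp) g'" by (rule g'c)
    show "f' ` fin_supp = f' ` fin_supp" ..
    fix x :: "nat \<Rightarrow> int" assume "x \<in> fin_supp" thus "g' (f' x) = x" by (rule g'f')
  next
    fix y assume "y \<in> f' ` fin_supp" thus "f' (g' y) = y" using g'f' by auto
  next
    show "g' ` f' ` fin_supp = fin_supp"
      using g'f' by (simp add: image_image)
  qed
  thus ?thesis using addf' by blast
qed

context
  fixes dummy :: "'a::{real_vector, topological_monoid_add, t2_space} itself"
  assumes sc: "continuous_on UNIV (\<lambda>p::real \<times> 'a. fst p *\<^sub>R snd p)"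
begin

lemma conv_fin:
  fixes a :: "nat \<Rightarrow> 'a"
  assumes x: "x \<in> fin_supp"
  shows "\<exists>L. ((\<lambda>N. ps a N x) \<longlongrightarrow> L) sequentially"
proof -
  obtain K where K: "\<forall>n\<in>{n. x n \<noteq> 0}. n < K"
    using x unfolding fin_supp_def using finite_nat_set_iff_bounded by blast
  have "eventually (\<lambda>N. ps a N x = ps a K x) sequentially"
    unfolding eventually_sequentially
  proof (intro exI allI impI)
    fix N assume "K \<le> N"
    hence "ps a N x - ps a K x = (\<Sum>n\<in>{K..<N}. x n *\<^sub>R a n)" by (rule ps_diff)
    also have "\<dots> = 0"
    proof (rule sum.neutral, rule ballI)
      fix n assume "n \<in> {K..<N}"
      hence "\<not> n < K" by simp
      hence "x n = 0" using K by blast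
      thus "x n *\<^sub>R a n = 0" by simp
    qed
    finally show "ps a N x = ps a K x" by simp
  qed
  hence "((\<lambda>N. ps a N x) \<longlongrightarrow> ps a K x) sequentially" by (rule tendsto_eventually)
  thus ?thesis ..
qed

lemma iii_i:
  assumes "\<exists>A::'a set. infinite A \<and> abs_cauchy_summable A"
  shows "\<exists>(f::(nat \<Rightarrow> real) \<Rightarrow> 'a) g.
              (\<forall>x\<in>fin_supp. \<forall>y\<in>fin_supp. f (\<lambda>n. x n + y n) = f x + f y) \<and>
              (\<forall>c. \<forall>x\<in>fin_supp. f (\<lambda>n. c * x n) = c *\<^sub>R f x) \<and>
              homeomorphism fin_supp (f ` fin_supp) f g"
proof -
  from assms obtain A :: "'a set" where A: "infinite A" "abs_cauchy_summable A" by blast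
  from iii_good[OF sc A] obtain a :: "nat \<Rightarrow> 'a" where a: "good_seq a" ..
  interpret G: gs dummy a fin_supp
  proof
    show "continuous_on UNIV (\<lambda>p::real \<times> 'a. fst p *\<^sub>R snd p)" by (rule sc)
    show "good_seq a" by (rule a)
    show "\<And>x. x \<in> fin_supp \<Longrightarrow> \<exists>L. ((\<lambda>N. ps a N x) \<longlongrightarrow> L) sequentially" by (simp add: conv_fin)
    show "\<And>x y :: nat \<Rightarrow> real. x \<in> fin_supp \<Longrightarrow> y \<in> fin_supp \<Longrightarrow> (\<lambda>n. x n + y n) \<in> fin_supp" by (simp add: fin_supp_add)
    show "\<And>(c::real) (x :: nat \<Rightarrow> real). x \<in> fin_supp \<Longrightarrow> (\<lambda>n. c * x n) \<in> fin_supp" by (simp add: fin_supp_mult)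
  qed
  show ?thesis
    using G.Phi_add G.Phi_scale G.Phi_homeo
    by (intro exI[of _ "Phi a"] exI[of _ "inv_into fin_supp (Phi a)"] conjI ballI allI) auto
qed

lemma iii_iv:
  assumes "\<exists>A::'a set. infinite A \<and> abs_cauchy_summable A" and comp: "tvs_complete (E::'a itself)"
  shows "\<exists>(f::(nat \<Rightarrow> real) \<Rightarrow> 'a) g.
              (\<forall>x y. f (\<lambda>n. x n + y n) = f x + f y) \<and>
              (\<forall>c x. f (\<lambda>n. c * x n) = c *\<^sub>R f x) \<and> homeomorphism UNIV (range f) f g"
proof -
  from assms obtain A :: "'a set" where A: "infinite A" "abs_cauchy_summable A" by blast
  from iii_good[OF sc A] obtain a :: "nat \<Rightarrow> 'a" where a: "good_seq a" ..
  have gs2: "\<exists>N. \<forall>S c. finite S \<and> S \<subseteq> {N..} \<longrightarrow> (\<Sum>m\<in>S. c m *\<^sub>R a m) \<in> U" if "open U" "0 \<in> U" for U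
    using a that unfolding good_seq_def by simp
  have conv: "\<exists>L. ((\<lambda>N. ps a N x) \<longlongrightarrow> L) sequentially" for x
  proof -
    define F where "F = filtermap (\<lambda>N. ps a N x) sequentially"
    have Fb: "F \<noteq> bot" unfolding F_def by (simp add: filtermap_bot_iff)
    have "tvs_cauchy F" unfolding tvs_cauchy_def
    proof (intro allI impI)
      fix U :: "'a set" assume U: "open U \<and> 0 \<in> U"
      from gs2[OF conjunct1[OF U] conjunct2[OF U]] obtain N where
        N: "\<forall>S c. finite S \<and> S \<subseteq> {N..} \<longrightarrow> (\<Sum>m\<in>S. c m *\<^sub>R a m) \<in> U" ..
      define S0 where "S0 = {ps a M x | M. N \<le> M}"
      have "eventually (\<lambda>y. y \<in> S0) F"
        unfolding F_def eventually_filtermap eventually_sequentially S0_def by blast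
      moreover have "\<forall>y\<in>S0. \<forall>z\<in>S0. y - z \<in> U"
      proof (intro ballI)
        fix y z assume "y \<in> S0" "z \<in> S0"
        then obtain M K where MK: "y = ps a M x" "N \<le> M" "z = ps a K x" "N \<le> K" unfolding S0_def by blast
        show "y - z \<in> U"
        proof (cases "K \<le> M")
          case True
          hence "y - z = (\<Sum>n\<in>{K..<M}. x n *\<^sub>R a n)" using MK(1,3) ps_diff[OF True, of a x] by simp
          moreover have "{K..<M} \<subseteq> {N..}" using MK by auto
          ultimately show ?thesis using N[rule_format, of "{K..<M}" x] by simp
        next
          case False
          hence MK': "M \<le> K" by simp
          have "z - y = (\<Sum>n\<in>{M..<K}. x n *\<^sub>R a n)" using MK(1,3) ps_diff[OF MK', of a x] by simp
          hence "y - z = - (\<Sum>n\<in>{M..<K}. x n *\<^sub>R a n)" by (metis minus_diff_eq)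
          hence "y - z = (\<Sum>n\<in>{M..<K}. (- x n) *\<^sub>R a n)" by (simp add: sum_negf)
          moreover have "{M..<K} \<subseteq> {N..}" using MK by auto
          ultimately show ?thesis using N[rule_format, of "{M..<K}" "\<lambda>n. - x n"] by simp
        qed
      qed
      ultimately show "\<exists>S. eventually (\<lambda>x. x \<in> S) F \<and> (\<forall>x\<in>S. \<forall>y\<in>S. x - y \<in> U)" by blast
    qed
    then obtain L where "F \<le> nhds L" using comp Fb unfolding tvs_complete_def by blast
    hence "((\<lambda>N. ps a N x) \<longlongrightarrow> L) sequentially" unfolding F_def filterlim_def .
    thus ?thesis ..
  qed
  interpret G: gs dummy a UNIV
  proof
    show "continuous_on UNIV (\<lambda>p::real \<times> 'a. fst p *\<^sub>R snd p)" by (rule sc)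
    show "good_seq a" by (rule a)
    show "\<And>x. x \<in> UNIV \<Longrightarrow> \<exists>L. ((\<lambda>N. ps a N x) \<longlongrightarrow> L) sequentially" using conv by blast
  qed auto
  show ?thesis
    using G.Phi_add G.Phi_scale G.Phi_homeo
    by (intro exI[of _ "Phi a"] exI[of _ "inv_into UNIV (Phi a)"] conjI ballI allI) auto
qed

end

lemma iv_i:
  fixes f :: "(nat \<Rightarrow> real) \<Rightarrow> 'b::{real_vector, topological_space}"
  assumes "(\<forall>x y. f (\<lambda>n. x n + y n) = f x + f y)" "(\<forall>c x. f (\<lambda>n. c * x n) = c *\<^sub>R f x)"
    "homeomorphism UNIV (range f) f g"
  shows "(\<forall>x\<in>fin_supp. \<forall>y\<in>fin_supp. f (\<lambda>n. x n + y n) = f x + f y) \<and>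
              (\<forall>c. \<forall>x\<in>fin_supp. f (\<lambda>n. c * x n) = c *\<^sub>R f x) \<and>
              homeomorphism fin_supp (f ` fin_supp) f g"
  using assms homeomorphism_of_subsets[OF assms(3), of fin_supp "range f" "f ` fin_supp"] by auto

theorem theorem11p1:
  fixes E :: "'a::{real_vector, topological_monoid_add, t2_space} itself"
  assumes scal_cont: "continuous_on UNIV (\<lambda>p::real \<times> 'a. fst p *\<^sub>R snd p)"
  defines "cond_i \<equiv> (\<exists>(f::(nat \<Rightarrow> real) \<Rightarrow> 'a) g.
              (\<forall>x\<in>fin_supp. \<forall>y\<in>fin_supp. f (\<lambda>n. x n + y n) = f x + f y) \<and>
              (\<forall>c. \<forall>x\<in>fin_supp. f (\<lambda>n. c * x n) = c *\<^sub>R f x) \<and>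
              homeomorphism fin_supp (f ` fin_supp) f g)"
      and "cond_ii \<equiv> (\<exists>(f::(nat \<Rightarrow> int) \<Rightarrow> 'a) g.
              (\<forall>x\<in>fin_supp. \<forall>y\<in>fin_supp. f (\<lambda>n. x n + y n) = f x + f y) \<and>
              homeomorphism fin_supp (f ` fin_supp) f g)"
      and "cond_iii \<equiv> (\<exists>A::'a set. infinite A \<and> abs_cauchy_summable A)"
      and "cond_iv \<equiv> (\<exists>(f::(nat \<Rightarrow> real) \<Rightarrow> 'a) g.
              (\<forall>x y. f (\<lambda>n. x n + y n) = f x + f y) \<and>
              (\<forall>c x. f (\<lambda>n. c * x n) = c *\<^sub>R f x) \<and> homeomorphism UNIV (range f) f g)"
  shows "(cond_i \<longleftrightarrow> cond_ii) \<and> (cond_ii \<longleftrightarrow> cond_iii) \<and>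
         (tvs_complete E \<longrightarrow> (cond_iii \<longleftrightarrow> cond_iv))"
proof -
  have c12: "cond_ii" if "cond_i"
  proof -
    from that[unfolded cond_i_def] obtain f :: "(nat \<Rightarrow> real) \<Rightarrow> 'a" where "\<exists>g.
              (\<forall>x\<in>fin_supp. \<forall>y\<in>fin_supp. f (\<lambda>n. x n + y n) = f x + f y) \<and>
              (\<forall>c. \<forall>x\<in>fin_supp. f (\<lambda>n. c * x n) = c *\<^sub>R f x) \<and>
              homeomorphism fin_supp (f ` fin_supp) f g" ..
    then obtain g where h: "(\<forall>x\<in>fin_supp. \<forall>y\<in>fin_supp. f (\<lambda>n. x n + y n) = f x + f y) \<and>
              (\<forall>c. \<forall>x\<in>fin_supp. f (\<lambda>n. c * x n) = c *\<^sub>R f x) \<and>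
              homeomorphism fin_supp (f ` fin_supp) f g" ..
    show ?thesis unfolding cond_ii_def by (rule i_ii[OF conjunct1[OF h] conjunct2[OF conjunct2[OF h]]])
  qed
  have c23: "cond_iii" if "cond_ii"
  proof -
    from that[unfolded cond_ii_def] obtain f :: "(nat \<Rightarrow> int) \<Rightarrow> 'a" where "\<exists>g.
              (\<forall>x\<in>fin_supp. \<forall>y\<in>fin_supp. f (\<lambda>n. x n + y n) = f x + f y) \<and>
              homeomorphism fin_supp (f ` fin_supp) f g" ..
    then obtain g where h: "(\<forall>x\<in>fin_supp. \<forall>y\<in>fin_supp. f (\<lambda>n. x n + y n) = f x + f y) \<and>
              homeomorphism fin_supp (f ` fin_supp) f g" ..
    show ?thesis unfolding cond_iii_def by (rule ii_iii[OF conjunct1[OF h] conjunct2[OF h]])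
  qed
  have c31: "cond_i" if "cond_iii"
    unfolding cond_i_def by (rule iii_i[OF scal_cont that[unfolded cond_iii_def]])
  have c34: "cond_iv" if "cond_iii" "tvs_complete E"
    unfolding cond_iv_def by (rule iii_iv[OF scal_cont that(1)[unfolded cond_iii_def] that(2)])
  have c41: "cond_i" if "cond_iv"
  proof -
    from that[unfolded cond_iv_def] obtain f :: "(nat \<Rightarrow> real) \<Rightarrow> 'a" where "\<exists>g.
              (\<forall>x y. f (\<lambda>n. x n + y n) = f x + f y) \<and>
              (\<forall>c x. f (\<lambda>n. c * x n) = c *\<^sub>R f x) \<and> homeomorphism UNIV (range f) f g" ..
    then obtain g where h: "(\<forall>x y. f (\<lambda>n. x n + y n) = f x + f y) \<and>
              (\<forall>c x. f (\<lambda>n. c * x n) = c *\<^sub>R f x) \<and> homeomorphism UNIV (range f) f g" ..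
    have "(\<forall>x\<in>fin_supp. \<forall>y\<in>fin_supp. f (\<lambda>n. x n + y n) = f x + f y) \<and>
              (\<forall>c. \<forall>x\<in>fin_supp. f (\<lambda>n. c * x n) = c *\<^sub>R f x) \<and>
              homeomorphism fin_supp (f ` fin_supp) f g"
      by (rule iv_i[OF conjunct1[OF h] conjunct1[OF conjunct2[OF h]] conjunct2[OF conjunct2[OF h]]])
    thus ?thesis unfolding cond_i_def by blast
  qed
  show ?thesis using c12 c23 c31 c34 c41 by blast
qed

end
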